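(* Let $B\ge1$ be an integer and $\alpha=1/\sqrt{B}$. Consider a residual network with hidden states $\mathbf{h}^0=\mathbf{x}\in\mathbb{R}^d$ and $\mathbf{h}^{b+1}=\mathbf{h}^b+\alpha F_b(\mathbf{h}^b)$ for $b=0,\ldots,B-1$, where each $F_b:\mathbb{R}^d\to\mathbb{R}^d$ is differentiable, and let $\ell$ be a differentiable loss of the output $\mathbf{h}^B$. Write $\mathbf{g}^b=\frac{\partial\ell}{\partial\mathbf{h}^b}$, so that $\mathbf{g}^b=\mathbf{g}^{b+1}+\alpha J_b^T\mathbf{g}^{b+1}$ where $J_b$ is the Jacobian of $F_b$ at $\mathbf{h}^b$. Assume that for each $b$, $\lVert J_b^T\mathbf{u}\rVert=\lVert\mathbf{u}\rVert$ for every $\mathbf{u}\in\mathbb{R}^d$, and $\langle\mathbf{g}^{b+1},J_b^T\mathbf{g}^{b+1}\rangle=0$. Then there exists $c\in[\sqrt{2},\sqrt{e}]$ such that $\lVert\mathbf{g}^0\rVert=c\cdot\lVert\mathbf{g}^B\rVert$.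
   Context: $\langle\cdot,\cdot\rangle$ is the Euclidean dot product; gradients are column vectors, and $J_b^T\mathbf{g}^{b+1}$ is the vector-Jacobian product $\frac{\partial F_b}{\partial\mathbf{h}^b}\cdot\frac{\partial\ell}{\partial\mathbf{h}^{b+1}}$. *)

theory Defs
  imports "HOL-Analysis.Analysis"
begin

definition resnet_map ::
  "real \<Rightarrow> (nat \<Rightarrow> real^'n \<Rightarrow> real^'n) \<Rightarrow> nat \<Rightarrow> nat \<Rightarrow> real^'n \<Rightarrow> real^'n" where
  "resnet_map \<alpha> F i j y = foldl (\<lambda>z k. z + \<alpha> *\<^sub>R F k z) y [i..<j]"

end

theory Submission
  imports Defs
begin

lemma resnet_map_step:
  "b < B \<Longrightarrow> resnet_map \<alpha> F b B y = resnet_map \<alpha> F (Suc b) B (y + \<alpha> *\<^sub>R F b y)"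
  unfolding resnet_map_def by (simp add: upt_conv_Cons)

lemma norm_add_scale_sq:
  fixes u v :: "'a::real_inner"
  shows "norm (u + a *\<^sub>R v)^2 = norm u^2 + 2*a*(u \<bullet> v) + a^2 * norm v^2"
  unfolding power2_norm_eq_inner
  by (simp add: inner_add_left inner_add_right inner_commute algebra_simps power2_eq_square)

theorem theorem4:
  fixes B :: nat and \<alpha> :: real and x :: "real^'n"
    and F :: "nat \<Rightarrow> real^'n \<Rightarrow> real^'n"
    and F' :: "nat \<Rightarrow> real^'n \<Rightarrow> (real^'n \<Rightarrow> real^'n)"
    and loss :: "real^'n \<Rightarrow> real"
    and h g :: "nat \<Rightarrow> real^'n"
  assumes B: "B \<ge> 1"
    and alpha: "\<alpha> = 1 / sqrt (real B)"
    and h0: "h 0 = x"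
    and hstep: "\<And>b. b < B \<Longrightarrow> h (Suc b) = h b + \<alpha> *\<^sub>R F b (h b)"
    and F_diff: "\<And>b y. b < B \<Longrightarrow> (F b has_derivative F' b y) (at y)"
    and loss_diff: "\<And>y. loss differentiable (at y)"
    and g_grad: "\<And>b. b \<le> B \<Longrightarrow>
        ((loss \<circ> resnet_map \<alpha> F b B) has_derivative (\<lambda>w. g b \<bullet> w)) (at (h b))"
    and J_iso: "\<And>b u. b < B \<Longrightarrow>
        norm (transpose (matrix (F' b (h b))) *v u) = norm u"
    and J_orth: "\<And>b. b < B \<Longrightarrow>
        g (Suc b) \<bullet> (transpose (matrix (F' b (h b))) *v g (Suc b)) = 0"
  shows "\<exists>c \<in> {sqrt 2 .. sqrt (exp 1)}. norm (g 0) = c * norm (g B)"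
proof -
  have a2: "\<alpha>^2 = 1 / real B" using alpha B by (simp add: power_divide)
  have gstep: "g b = g (Suc b) + \<alpha> *\<^sub>R (transpose (matrix (F' b (h b))) *v g (Suc b))"
    if b: "b < B" for b
  proof -
    let ?S = "\<lambda>z. z + \<alpha> *\<^sub>R F b z"
    let ?L = "F' b (h b)"
    have dS: "(?S has_derivative (\<lambda>w. w + \<alpha> *\<^sub>R ?L w)) (at (h b))"
      by (intro derivative_intros F_diff b)
    have dR: "((loss \<circ> resnet_map \<alpha> F (Suc b) B) has_derivative (\<lambda>w. g (Suc b) \<bullet> w)) (at (?S (h b)))"
      using g_grad[of "Suc b"] b hstep[OF b] by simp
    have "((loss \<circ> resnet_map \<alpha> F (Suc b) B) \<circ> ?S has_derivative
        (\<lambda>w. g (Suc b) \<bullet> w) \<circ> (\<lambda>w. w + \<alpha> *\<^sub>R ?L w)) (at (h b))"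
      by (rule diff_chain_at[OF dS dR])
    moreover have "(loss \<circ> resnet_map \<alpha> F (Suc b) B) \<circ> ?S = loss \<circ> resnet_map \<alpha> F b B"
      by (simp add: fun_eq_iff resnet_map_step[OF b])
    ultimately have d1: "(loss \<circ> resnet_map \<alpha> F b B has_derivative
        (\<lambda>w. g (Suc b) \<bullet> w) \<circ> (\<lambda>w. w + \<alpha> *\<^sub>R ?L w)) (at (h b))" by simp
    have eq: "(\<lambda>w. g b \<bullet> w) = (\<lambda>w. g (Suc b) \<bullet> w) \<circ> (\<lambda>w. w + \<alpha> *\<^sub>R ?L w)"
      using has_derivative_unique[OF g_grad[of b] d1] b by (simp add: o_def)
    have lin: "linear ?L" using F_diff[OF b, of "h b"] has_derivative_linear by blast
    have "g b \<bullet> w = (g (Suc b) + \<alpha> *\<^sub>R (transpose (matrix ?L) *v g (Suc b))) \<bullet> w" for w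
    proof -
      have "g b \<bullet> w = g (Suc b) \<bullet> w + \<alpha> * (g (Suc b) \<bullet> ?L w)"
        using fun_cong[OF eq, of w] by (simp add: inner_add_right)
      also have "?L w = matrix ?L *v w" using fun_cong[OF matrix_vector_mul(2)[OF lin], of w] by simp
      also have "g (Suc b) \<bullet> (matrix ?L *v w) = (transpose (matrix ?L) *v g (Suc b)) \<bullet> w"
        by (simp add: dot_lmul_matrix)
      finally show ?thesis by (simp add: inner_add_left)
    qed
    then have "(g b - (g (Suc b) + \<alpha> *\<^sub>R (transpose (matrix ?L) *v g (Suc b)))) \<bullet>
               (g b - (g (Suc b) + \<alpha> *\<^sub>R (transpose (matrix ?L) *v g (Suc b)))) = 0"
      by (simp add: inner_diff_left)
    then show ?thesis by simp
  qed
  have nstep: "norm (g b)^2 = (1 + \<alpha>^2) * norm (g (Suc b))^2" if b: "b < B" for b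
  proof -
    let ?u = "g (Suc b)" and ?v = "transpose (matrix (F' b (h b))) *v g (Suc b)"
    have "norm (g b)^2 = norm (?u + \<alpha> *\<^sub>R ?v)^2" using gstep[OF b] by simp
    also have "\<dots> = norm ?u ^2 + 2 * \<alpha> * (?u \<bullet> ?v) + \<alpha>^2 * norm ?v ^2"
      by (rule norm_add_scale_sq)
    also have "\<dots> = (1 + \<alpha>^2) * norm ?u ^2" using J_orth[OF b] J_iso[OF b] by (simp add: algebra_simps)
    finally show ?thesis .
  qed
  have ind: "k \<le> B \<Longrightarrow> norm (g (B - k))^2 = (1 + \<alpha>^2)^k * norm (g B)^2" for k
  proof (induction k)
    case 0 then show ?case by simp
  next
    case (Suc k)
    have e: "Suc (B - Suc k) = B - k" using Suc.prems by simp
    have "norm (g (B - Suc k))^2 = (1 + \<alpha>^2) * norm (g (B - k))^2"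
      using nstep[of "B - Suc k"] Suc.prems e by simp
    then show ?case using Suc by simp
  qed
  from ind[of B] have n0: "norm (g 0)^2 = (1 + 1 / real B)^B * norm (g B)^2" by (simp add: a2)
  define c where "c = sqrt ((1 + 1 / real B)^B)"
  have "norm (g 0) = sqrt (norm (g 0)^2)" by simp
  also have "\<dots> = c * norm (g B)" unfolding n0 c_def by (simp add: real_sqrt_mult)
  finally have eqc: "norm (g 0) = c * norm (g B)" .
  have lo: "2 \<le> (1 + 1 / real B)^B"
  proof -
    have "1 + real B * (1 / real B) \<le> (1 + 1 / real B)^B"
      by (rule Bernoulli_inequality) (smt (verit) divide_nonneg_nonneg of_nat_0_le_iff)
    then show ?thesis using B by simp
  qed
  have hi: "(1 + 1 / real B)^B \<le> exp 1"
  proof -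
    have "(1 + 1 / real B)^B \<le> exp (1 / real B)^B"
      by (intro power_mono) (auto simp: exp_ge_add_one_self add_nonneg_nonneg)
    also have "\<dots> = exp 1" using B by (simp add: exp_of_nat_mult[symmetric])
    finally show ?thesis .
  qed
  have "c \<in> {sqrt 2 .. sqrt (exp 1)}" unfolding c_def using lo hi by simp
  with eqc show ?thesis by blast
qed

end
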